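(* Let $M$ be a finite abelian group of even order and exponent greater than $2$, written as $M=C_{2i_1}\times\cdots\times C_{2i_s}\times M_1$ with $M_1$ of odd order, $s\geq 1$, and $i_j\geq 1$ for all $j$. Then $|\mathcal{H}_M|=4^s$.
   Context: $C_n$ denotes the cyclic group of order $n$. Let $K=\{1,a,b,c\}$ be the Klein four-group. Set $L_M=K\times M$ with the operation $(A,x)*(B,y)=(AB,xy)$ if $B=1$, and $(A,x)*(B,y)=(AB,x^{-1}y)$ if $B\neq 1$. Write $(1,M)=\{(1,x):x\in M\}$. Let $\mathcal{H}_M$ be the set of subloops $H$ of $L_M$ that are isomorphic to $K$ and satisfy $|H\cap(1,M)|=1$. *)

theory Defs
  imports "HOL-Algebra.Algebra"
begin

definition grp_exponent :: "('a, 'b) monoid_scheme \<Rightarrow> nat" where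
  "grp_exponent G = (LEAST n. 0 < n \<and> (\<forall>x\<in>carrier G. x [^]\<^bsub>G\<^esub> n = \<one>\<^bsub>G\<^esub>))"

datatype klein = K1 | Ka | Kb | Kc

fun kmul :: "klein \<Rightarrow> klein \<Rightarrow> klein" where
  "kmul K1 y = y"
| "kmul x K1 = x"
| "kmul Ka Ka = K1" | "kmul Ka Kb = Kc" | "kmul Ka Kc = Kb"
| "kmul Kb Ka = Kc" | "kmul Kb Kb = K1" | "kmul Kb Kc = Ka"
| "kmul Kc Ka = Kb" | "kmul Kc Kb = Ka" | "kmul Kc Kc = K1"

definition Lcarrier :: "('a, 'b) monoid_scheme \<Rightarrow> (klein \<times> 'a) set" where
  "Lcarrier M = UNIV \<times> carrier M"

definition Lmul :: "('a, 'b) monoid_scheme \<Rightarrow> klein \<times> 'a \<Rightarrow> klein \<times> 'a \<Rightarrow> klein \<times> 'a" where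
  "Lmul M p q = (kmul (fst p) (fst q),
      (if fst q = K1 then snd p \<otimes>\<^bsub>M\<^esub> snd q else inv\<^bsub>M\<^esub> (snd p) \<otimes>\<^bsub>M\<^esub> snd q))"

definition Lone :: "('a, 'b) monoid_scheme \<Rightarrow> klein \<times> 'a" where
  "Lone M = (K1, \<one>\<^bsub>M\<^esub>)"

definition is_subloop :: "('a, 'b) monoid_scheme \<Rightarrow> (klein \<times> 'a) set \<Rightarrow> bool" where
  "is_subloop M H \<longleftrightarrow> H \<subseteq> Lcarrier M \<and> Lone M \<in> H
     \<and> (\<forall>p\<in>H. \<forall>q\<in>H. Lmul M p q \<in> H)
     \<and> (\<forall>p\<in>H. \<forall>q\<in>H. (\<exists>!x. x \<in> H \<and> Lmul M p x = q) \<and> (\<exists>!y. y \<in> H \<and> Lmul M y p = q))"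

definition iso_to_klein :: "('a, 'b) monoid_scheme \<Rightarrow> (klein \<times> 'a) set \<Rightarrow> bool" where
  "iso_to_klein M H \<longleftrightarrow> (\<exists>f. bij_betw f (UNIV :: klein set) H
       \<and> (\<forall>u v. f (kmul u v) = Lmul M (f u) (f v)))"

definition calH :: "('a, 'b) monoid_scheme \<Rightarrow> (klein \<times> 'a) set set" where
  "calH M = {H. is_subloop M H \<and> iso_to_klein M H
       \<and> card (H \<inter> ({K1} \<times> carrier M)) = 1}"

end

theory Submission
  imports Defs
begin


definition Om :: "('a,'b) monoid_scheme \<Rightarrow> 'a set" where
  "Om G = {x \<in> carrier G. x \<otimes>\<^bsub>G\<^esub> x = \<one>\<^bsub>G\<^esub>}"

lemma Om_iso:
  assumes "h \<in> iso G H" "group G" "group H"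
  shows "card (Om G) = card (Om H)"
proof -
  have hom: "h \<in> hom G H" and bij: "bij_betw h (carrier G) (carrier H)" using assms by (auto simp: iso_def)
  have h1: "h \<one>\<^bsub>G\<^esub> = \<one>\<^bsub>H\<^esub>" using hom_one[OF hom assms(2,3)] .
  have inj: "inj_on h (carrier G)" using bij by (simp add: bij_betw_def)
  have "h ` Om G = Om H"
  proof
    show "h ` Om G \<subseteq> Om H"
      using hom h1 by (auto simp: Om_def hom_mult[symmetric] hom_def)
    show "Om H \<subseteq> h ` Om G"
    proof
      fix y assume y: "y \<in> Om H"
      then obtain x where x: "x \<in> carrier G" "y = h x" using bij by (auto simp: Om_def bij_betw_def)
      have "h (x \<otimes>\<^bsub>G\<^esub> x) = h \<one>\<^bsub>G\<^esub>" using y x h1 hom_mult[OF hom x(1) x(1)] by (simp add: Om_def)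
      then have "x \<otimes>\<^bsub>G\<^esub> x = \<one>\<^bsub>G\<^esub>"
        using inj x assms(2) by (meson group.is_monoid inj_onD monoid.m_closed monoid.one_closed)
      then show "y \<in> h ` Om G" using x by (auto simp: Om_def)
    qed
  qed
  moreover have "inj_on h (Om G)" using inj by (rule inj_on_subset) (auto simp: Om_def)
  ultimately show ?thesis by (metis card_image)
qed

lemma (in group) Om_odd:
  assumes "finite (carrier G)" "odd (order G)"
  shows "Om G = {\<one>}"
proof -
  have "x = \<one>" if x: "x \<in> carrier G" "x \<otimes> x = \<one>" for x
  proof -
    obtain m where m: "order G = Suc (2*m)" using assms(2) oddE by fastforce
    have "x [^] order G = \<one>" using pow_order_eq_1 assms(1) x(1) by blast
    moreover have "x [^] (Suc (2*m)) = (x \<otimes> x) [^] m \<otimes> x"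
    proof -
      have "x [^] (2::nat) = x \<otimes> x" using x(1) by (simp add: numeral_2_eq_2)
      moreover have "x [^] (2*m) = (x [^] (2::nat)) [^] m" using nat_pow_pow x(1) by simp
      ultimately show ?thesis by (simp add: nat_pow_Suc)
    qed
    ultimately show ?thesis using x m by simp
  qed
  then show ?thesis by (auto simp: Om_def)
qed

lemma int_half: fixes x K :: int assumes "0 \<le> x" "x < 2*K" "(x+x) mod (2*K) = 0" shows "x = 0 \<or> x = K"
proof (cases "x < K")
  case True
  then have "(x+x) mod (2*K) = x+x" using assms by (intro mod_pos_pos_trivial) auto
  then show ?thesis using assms by simp
next
  case False
  then have "(x+x - 2*K) mod (2*K) = x+x-2*K" using assms by (intro mod_pos_pos_trivial) auto
  moreover have "(x+x - 2*K) mod (2*K) = (x+x) mod (2*K)" by (simp add: mod_diff_right_eq[symmetric])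
  ultimately show ?thesis using assms by simp
qed

lemma Om_DirProd: "Om (G \<times>\<times> H) = Om G \<times> Om H"
  by (auto simp: Om_def)

lemma Om_Zmod:
  assumes "k \<ge> 1"
  shows "Om (integer_mod_group (2*k)) = {0, int k}"
proof -
  have "x = 0 \<or> x = int k" if hx: "0 \<le> x" "x < 2 * int k" "int k dvd x" for x
  proof -
    obtain q where q: "x = int k * q" using hx(3) by blast
    have "0 \<le> q" "q < 2" using hx q assms by (auto simp: zero_le_mult_iff)
    then have "q = 0 \<or> q = 1" by auto
    then show ?thesis using q by auto
  qed
  moreover have "(int k + int k) mod (2 * int k) = 0" by simp
  ultimately show ?thesis using assms by (auto simp: Om_def carrier_integer_mod_group)
qed

lemma Om_product:
  shows "Om (product_group I G) = (\<Pi>\<^sub>E i\<in>I. Om (G i))"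
proof -
  have "(\<lambda>i\<in>I. x i \<otimes>\<^bsub>G i\<^esub> x i) = (\<lambda>i\<in>I. \<one>\<^bsub>G i\<^esub>) \<longleftrightarrow> (\<forall>i\<in>I. x i \<otimes>\<^bsub>G i\<^esub> x i = \<one>\<^bsub>G i\<^esub>)" for x
    by (metis (mono_tags, lifting) restrict_apply restrict_ext)
  then show ?thesis by (auto simp: Om_def PiE_iff) (meson extensional_arb)
qed

lemma kmul_cancel: "kmul u (kmul u v) = v" by (cases u; cases v) auto
lemma kmul_self: "kmul u u = K1" by (cases u) auto
lemma klein_UNIV: "(UNIV :: klein set) = {K1, Ka, Kb, Kc}" using klein.exhaust by blast
lemma card_klein: "card (UNIV :: klein set) = 4" by (simp add: klein_UNIV)

lemma subloop_from_iso:
  assumes bij: "bij_betw f UNIV H" and hom: "\<forall>u v. f (kmul u v) = Lmul M (f u) (f v)"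
    and sub: "H \<subseteq> Lcarrier M" and one: "f K1 = Lone M"
  shows "is_subloop M H"
proof -
  have H: "H = range f" using bij by (simp add: bij_betw_def)
  have inj: "f a = f b \<Longrightarrow> a = b" for a b using bij by (auto simp: bij_betw_def inj_on_def)
  have cl: "\<forall>p\<in>H. \<forall>q\<in>H. Lmul M p q \<in> H" using H by (auto simp: hom[rule_format, symmetric])
  have ld: "\<exists>!x. x \<in> H \<and> Lmul M p x = q" if hpq: "p \<in> H" "q \<in> H" for p q
  proof -
    obtain u v where uv: "p = f u" "q = f v" using hpq H by auto
    show ?thesis
    proof
      show "f (kmul u v) \<in> H \<and> Lmul M p (f (kmul u v)) = q"
        using H uv by (simp add: hom[rule_format, symmetric] kmul_cancel)
      fix x assume x: "x \<in> H \<and> Lmul M p x = q"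
      then obtain w where w: "x = f w" using H by auto
      then have "f (kmul u w) = f v" using x uv by (simp add: hom[rule_format, symmetric])
      then have "kmul u w = v" by (rule inj)
      then have "w = kmul u v" by (cases w; cases u) auto
      then show "x = f (kmul u v)" using w by simp
    qed
  qed
  have rd: "\<exists>!y. y \<in> H \<and> Lmul M y p = q" if hpq: "p \<in> H" "q \<in> H" for p q
  proof -
    obtain u v where uv: "p = f u" "q = f v" using hpq H by auto
    have comm: "kmul a b = kmul b a" for a b by (cases a; cases b) auto
    show ?thesis
    proof
      show "f (kmul u v) \<in> H \<and> Lmul M (f (kmul u v)) p = q"
        using H uv by (simp add: hom[rule_format, symmetric] kmul_cancel comm)
      fix x assume x: "x \<in> H \<and> Lmul M x p = q"
      then obtain w where w: "x = f w" using H by auto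
      then have "f (kmul w u) = f v" using x uv by (simp add: hom[rule_format, symmetric])
      then have "kmul w u = v" by (rule inj)
      then have "w = kmul u v" by (cases w; cases u) auto
      then show "x = f (kmul u v)" using w by simp
    qed
  qed
  have "f K1 \<in> H" using H by simp
  then have "Lone M \<in> H" using one by simp
  then show ?thesis unfolding is_subloop_def
  proof (intro conjI ballI sub)
    fix p q assume "p \<in> H" "q \<in> H"
    then show "Lmul M p q \<in> H" "\<exists>!x. x \<in> H \<and> Lmul M p x = q" "\<exists>!y. y \<in> H \<and> Lmul M y p = q"
      using cl ld rd by auto
  qed
qed

definition Hset :: "('a,'b) monoid_scheme \<Rightarrow> 'a \<Rightarrow> 'a \<Rightarrow> (klein \<times> 'a) set" where
  "Hset M x y = {(K1, \<one>\<^bsub>M\<^esub>), (Ka, x), (Kb, y), (Kc, x \<otimes>\<^bsub>M\<^esub> y)}"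

lemma (in comm_group) Hset_in:
  assumes x: "x \<in> Om G" and y: "y \<in> Om G"
  shows "Hset G x y \<in> calH G"
proof -
  have xc: "x \<in> carrier G" and xx: "x \<otimes> x = \<one>" using x by (auto simp: Om_def)
  have yc: "y \<in> carrier G" and yy: "y \<otimes> y = \<one>" using y by (auto simp: Om_def)
  have ix: "inv x = x" using inv_equality[OF xx xc xc] .
  have iy: "inv y = y" using inv_equality[OF yy yc yc] .
  have ixy: "inv (x \<otimes> y) = x \<otimes> y" using ix iy xc yc inv_mult by simp
  have f1: "x \<otimes> (x \<otimes> y) = y" using xx xc yc by (simp flip: m_assoc)
  have f2: "y \<otimes> (x \<otimes> y) = x" using xc yc by (simp add: m_lcomm[of y x y] yy)
  have f3: "x \<otimes> y \<otimes> x = y" using m_comm[OF m_closed[OF xc yc] xc] f1 by simp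
  have f4: "x \<otimes> y \<otimes> y = x" using yy xc yc by (simp add: m_assoc)
  have f5: "x \<otimes> y \<otimes> (x \<otimes> y) = \<one>" using xc yc by (simp add: m_assoc f2 xx)
  have f6: "y \<otimes> x = x \<otimes> y" by (rule m_comm[OF yc xc])
  define f where "f u = (case u of K1 \<Rightarrow> (K1, \<one>) | Ka \<Rightarrow> (Ka, x) | Kb \<Rightarrow> (Kb, y) | Kc \<Rightarrow> (Kc, x \<otimes> y))" for u
  have hom: "\<forall>u v. f (kmul u v) = Lmul G (f u) (f v)"
    apply (intro allI)
    subgoal for u v
      by (cases u; cases v) (simp_all add: f_def Lmul_def ix iy ixy xx yy f1 f2 f3 f4 f5 f6 xc yc)
    done
  have fst_f: "fst (f u) = u" for u by (cases u) (simp_all add: f_def)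
  have img: "range f = Hset G x y" by (auto simp: klein_UNIV f_def Hset_def)
  have bij: "bij_betw f UNIV (Hset G x y)"
  proof (rule bij_betw_imageI)
    show "inj_on f UNIV" by (rule inj_on_inverseI[of _ fst]) (simp add: fst_f)
  qed (rule img)
  have sub: "Hset G x y \<subseteq> Lcarrier G" using xc yc by (auto simp: Hset_def Lcarrier_def)
  have one: "f K1 = Lone G" by (simp add: f_def Lone_def)
  have "is_subloop G (Hset G x y)" by (rule subloop_from_iso[OF bij hom sub one])
  moreover have "iso_to_klein G (Hset G x y)" unfolding iso_to_klein_def using bij hom by blast
  moreover have "Hset G x y \<inter> ({K1} \<times> carrier G) = {(K1, \<one>)}" by (auto simp: Hset_def)
  ultimately show ?thesis by (simp add: calH_def)
qed


lemma (in comm_group) calH_sub: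
  assumes HH: "H \<in> calH G"
  shows "\<exists>x y. x \<in> Om G \<and> y \<in> Om G \<and> H = Hset G x y"
proof -
  have sl: "is_subloop G H" and ik: "iso_to_klein G H" and c1: "card (H \<inter> ({K1} \<times> carrier G)) = 1"
    using HH[unfolded calH_def mem_Collect_eq] by blast+
  obtain f where bij: "bij_betw f (UNIV :: klein set) H" using ik unfolding iso_to_klein_def by blast
  have finK: "finite (UNIV :: klein set)" by (simp add: klein_UNIV)
  have fin: "finite H" using bij_betw_finite[OF bij] finK by simp
  have cH: "card H = 4" using bij_betw_same_card[OF bij] card_klein by simp
  note sl' = sl[unfolded is_subloop_def]
  have sub: "H \<subseteq> UNIV \<times> carrier G" using sl'[THEN conjunct1] by (simp add: Lcarrier_def)
  have oneH: "(K1, \<one>) \<in> H" using sl'[THEN conjunct2, THEN conjunct1] by (simp add: Lone_def)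
  have clo: "Lmul G p q \<in> H" if "p \<in> H" "q \<in> H" for p q
    using sl'[THEN conjunct2, THEN conjunct2, THEN conjunct1] that by blast
  have int1: "H \<inter> ({K1} \<times> carrier G) = {(K1, \<one>)}"
  proof -
    obtain e where e: "H \<inter> ({K1} \<times> carrier G) = {e}" using c1 card_1_singletonE by blast
    moreover have "(K1, \<one>) \<in> H \<inter> ({K1} \<times> carrier G)" using oneH by simp
    ultimately show ?thesis by auto
  qed
  have K1u: "a = \<one>" if ha: "(K1, a) \<in> H" for a
  proof -
    have "a \<in> carrier G" using ha sub by auto
    then have "(K1, a) \<in> H \<inter> ({K1} \<times> carrier G)" using ha by simp
    then show ?thesis unfolding int1 by simp
  qed
  have injf: "inj_on fst H"
  proof (rule inj_onI)
    fix p q assume p: "p \<in> H" and q: "q \<in> H" and e: "fst p = fst q"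
    obtain k a b where pq: "p = (k, a)" "q = (k, b)" using e by (cases p; cases q) auto
    have ab: "a \<in> carrier G" "b \<in> carrier G" using p q pq sub by auto
    show "p = q"
    proof (cases "k = K1")
      case True
      then have "a = \<one>" "b = \<one>" using p q pq K1u by auto
      then show ?thesis using pq by simp
    next
      case False
      have "Lmul G p q = (K1, inv a \<otimes> b)" using False pq by (simp add: Lmul_def kmul_self)
      then have h: "inv a \<otimes> b = \<one>" using clo[OF p q] K1u by simp
      have "inv a \<otimes> b = inv a \<otimes> a" by (simp only: l_inv[OF ab(1)] h)
      then have "b = a" by (rule l_cancel[OF _ ab(2) ab(1) inv_closed[OF ab(1)]])
      then show ?thesis using pq by simp
    qed
  qed
  have "fst ` H = UNIV"
  proof (rule card_subset_eq)
    show "card (fst ` H) = card (UNIV :: klein set)" using card_image[OF injf] cH card_klein by simp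
  qed (auto simp: finK)
  then have ex: "\<exists>w. (k, w) \<in> H" for k
  proof -
    have "k \<in> fst ` H" using \<open>fst ` H = UNIV\<close> by simp
    then obtain p where "p \<in> H" "k = fst p" by blast
    then show ?thesis by (cases p) auto
  qed
  obtain x where xH: "(Ka, x) \<in> H" using ex by blast
  obtain y where yH: "(Kb, y) \<in> H" using ex by blast
  obtain z where zH: "(Kc, z) \<in> H" using ex by blast
  have uniq: "p = q" if "p \<in> H" "q \<in> H" "fst p = fst q" for p q using injf that by (simp add: inj_on_def)
  have xc: "x \<in> carrier G" and yc: "y \<in> carrier G" and zc: "z \<in> carrier G" using xH yH zH sub by auto
  have Heq: "H = {(K1, \<one>), (Ka, x), (Kb, y), (Kc, z)}"
  proof
    show "H \<subseteq> {(K1, \<one>), (Ka, x), (Kb, y), (Kc, z)}"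
    proof
      fix p assume p: "p \<in> H"
      show "p \<in> {(K1, \<one>), (Ka, x), (Kb, y), (Kc, z)}"
      proof (cases "fst p")
        case K1 then show ?thesis using uniq[OF p oneH] by simp
      next
        case Ka then show ?thesis using uniq[OF p xH] by simp
      next
        case Kb then show ?thesis using uniq[OF p yH] by simp
      next
        case Kc then show ?thesis using uniq[OF p zH] by simp
      qed
    qed
  qed (use oneH xH yH zH in auto)
  have e1: "z = inv x \<otimes> y" using uniq[OF zH clo[OF xH yH]] by (simp add: Lmul_def)
  have e2: "x = inv y \<otimes> z" using uniq[OF xH clo[OF yH zH]] by (simp add: Lmul_def)
  have e3: "z = inv y \<otimes> x" using uniq[OF zH clo[OF yH xH]] by (simp add: Lmul_def)
  have ixx: "inv x = x"
  proof -
    have "x = inv y \<otimes> (inv x \<otimes> y)" using e1 e2 by simp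
    also have "\<dots> = inv x" using xc yc by (simp add: m_lcomm[of "inv y" "inv x" y])
    finally show ?thesis by simp
  qed
  have xx: "x \<otimes> x = \<one>" using r_inv[OF xc] ixx by simp
  have zxy: "z = x \<otimes> y" using e1 ixx by simp
  have iyy: "inv y = y"
  proof -
    have "x \<otimes> y = inv y \<otimes> x" using e3 zxy by simp
    also have "\<dots> = x \<otimes> inv y" using m_comm[OF inv_closed[OF yc] xc] .
    finally have "y = inv y" using xc yc by simp
    then show ?thesis by simp
  qed
  have yy: "y \<otimes> y = \<one>" using r_inv[OF yc] iyy by simp
  have "x \<in> Om G" "y \<in> Om G" using xc yc xx yy by (auto simp: Om_def)
  moreover have "H = Hset G x y" using Heq zxy by (simp add: Hset_def)
  ultimately show ?thesis by blast
qed

lemma Hset_inj: "inj_on (\<lambda>(x, y). Hset G x y) (A \<times> B)"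
proof (rule inj_onI, clarify)
  fix x y x' y' assume "Hset G x y = Hset G x' y'"
  moreover have "(Ka, x) \<in> Hset G x y" "(Kb, y) \<in> Hset G x y" by (simp_all add: Hset_def)
  ultimately have "(Ka, x) \<in> Hset G x' y'" "(Kb, y) \<in> Hset G x' y'" by simp_all
  then show "x = x' \<and> y = y'" by (simp add: Hset_def)
qed

lemma (in comm_group) card_calH: "card (calH G) = card (Om G) ^ 2"
proof -
  have "calH G = (\<lambda>(x, y). Hset G x y) ` (Om G \<times> Om G)"
  proof
    show "calH G \<subseteq> (\<lambda>(x, y). Hset G x y) ` (Om G \<times> Om G)"
    proof
      fix H assume "H \<in> calH G"
      then obtain x y where "x \<in> Om G" "y \<in> Om G" "H = Hset G x y" using calH_sub by blast
      then show "H \<in> (\<lambda>(x, y). Hset G x y) ` (Om G \<times> Om G)" by auto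
    qed
  qed (auto intro: Hset_in)
  then have "card (calH G) = card (Om G \<times> Om G)" using card_image[OF Hset_inj] by simp
  then show ?thesis by (simp add: card_cartesian_product power2_eq_square)
qed


theorem corollary4p6:
  fixes M :: "'a monoid" and M1 :: "'b monoid" and s :: nat and i :: "nat \<Rightarrow> nat"
  assumes "comm_group M" and "finite (carrier M)"
    and "even (order M)" and "grp_exponent M > 2"
    and "comm_group M1" and "finite (carrier M1)" and "odd (order M1)"
    and "s \<ge> 1" and "\<forall>j<s. i j \<ge> 1"
    and "M \<cong> DirProd (product_group {..<s} (\<lambda>j. integer_mod_group (2 * i j))) M1"
  shows "card (calH M) = 4 ^ s"
proof -
  let ?PG = "product_group {..<s} (\<lambda>j. integer_mod_group (2 * i j))"
  let ?P = "DirProd ?PG M1"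
  obtain h where h: "h \<in> iso M ?P" using assms(10) unfolding is_iso_def by blast
  have gM: "group M" using assms(1) comm_group.axioms(2) by blast
  have gM1: "group M1" using assms(5) comm_group.axioms(2) by blast
  have gPG: "group ?PG" by (rule product_group) simp
  have gP: "group ?P" by (rule DirProd_group[OF gPG gM1])
  have "card (Om M) = card (Om ?P)" by (rule Om_iso[OF h gM gP])
  also have "Om ?P = Om ?PG \<times> {\<one>\<^bsub>M1\<^esub>}"
    by (simp only: Om_DirProd group.Om_odd[OF gM1 assms(6,7)])
  also have "card \<dots> = card (Om ?PG)" by (simp add: card_cartesian_product)
  also have "Om ?PG = (\<Pi>\<^sub>E j\<in>{..<s}. {0, int (i j)})"
    unfolding Om_product using assms(9) by (intro PiE_cong) (simp add: Om_Zmod)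
  also have "card \<dots> = (\<Prod>j<s. card {0, int (i j)})" by (simp add: card_PiE)
  also have "\<dots> = (\<Prod>j<s. 2)" using assms(9) by (intro prod.cong) auto
  also have "\<dots> = 2 ^ s" by simp
  finally have "card (Om M) = 2 ^ s" .
  moreover have "((2::nat) ^ s) ^ 2 = (2 ^ 2) ^ s" by (simp only: power_mult[symmetric] mult.commute)
  ultimately show ?thesis using comm_group.card_calH[OF assms(1)] by simp
qed

end
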